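(* Let $(a_{n,i})_{n\ge1,1\le i\le n}$ be a deterministic array with $\sum_{i=1}^n|a_{n,i}|^2\le\frac{4}{n}$ for all $n$, and let $\gamma>0$. Let $V_1,V_2,\ldots$ be independent random variables with $V_i\sim\mathbb{P}_{V_i}$. Then $$\lim_{n\to\infty}\ \sup_{\mathbb{P}_{V_1},\ldots,\mathbb{P}_{V_n}\in\mathcal{D}_{1+\gamma}}\mathbb{E}\Bigl[\Bigl|\sum_{i=1}^n a_{n,i}\bigl(V_i-\mathbb{E}[V_i]\bigr)\Bigr|\Bigr]=0.$$
   Context: For $s>0$, $\mathcal{D}_s$ is the class of distributions of $\xi$ with $\mathbb{E}[\xi]=0$ and $1\le\mathbb{E}[|\xi|^s]\le2$. *)

theory Defs
  imports "HOL-Probability.Probability"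
begin

definition dist_class :: "real \<Rightarrow> real measure set" where
  "dist_class s = {M. prob_space M \<and> sets M = sets borel \<and>
      integrable M (\<lambda>x. x) \<and> (\<integral>x. x \<partial>M) = 0 \<and>
      1 \<le> (\<integral>\<^sup>+ x. ennreal (\<bar>x\<bar> powr s) \<partial>M) \<and>
      (\<integral>\<^sup>+ x. ennreal (\<bar>x\<bar> powr s) \<partial>M) \<le> 2}"

end

theory Submission
  imports Defs
begin

lemma coord_meas:
  assumes "i \<in> I" "sets (M i) = sets borel" "(g :: real \<Rightarrow> real) \<in> borel_measurable borel"
  shows "(\<lambda>v. g (v i)) \<in> borel_measurable (PiM I M)"
proof -
  have "g \<in> borel_measurable (M i)" unfolding measurable_cong_sets[OF assms(2) refl] by (rule assms(3))
  then show ?thesis by (rule measurable_compose[OF measurable_component_singleton[OF assms(1)]])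
qed

lemma coord_integral:
  assumes "i \<in> I" "\<And>k. k \<in> I \<Longrightarrow> prob_space (M k)" "sets (M i) = sets borel"
    "(g :: real \<Rightarrow> real) \<in> borel_measurable borel"
  shows "(\<integral>v. g (v i) \<partial>PiM I M) = integral\<^sup>L (M i) g"
    "integrable (PiM I M) (\<lambda>v. g (v i)) \<longleftrightarrow> integrable (M i) g"
proof -
  have g: "g \<in> borel_measurable (M i)" unfolding measurable_cong_sets[OF assms(3) refl] by (rule assms(4))
  have d: "distr (PiM I M) (M i) (\<lambda>v. v i) = M i" by (rule distr_PiM_component[OF assms(2) assms(1)])
  show "(\<integral>v. g (v i) \<partial>PiM I M) = integral\<^sup>L (M i) g"
    using integral_distr[OF measurable_component_singleton[OF assms(1), of M] g] d by simp
  show "integrable (PiM I M) (\<lambda>v. g (v i)) \<longleftrightarrow> integrable (M i) g"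
    using integrable_distr_eq[OF measurable_component_singleton[OF assms(1), of M] g] d by simp
qed

lemma pair_integral:
  fixes f g :: "real \<Rightarrow> real" and I :: "nat set" and M :: "nat \<Rightarrow> real measure"
  assumes "finite I" "i \<in> I" "j \<in> I" "i \<noteq> j" "\<And>k. k \<in> I \<Longrightarrow> prob_space (M k)"
    "integrable (M i) f" "integrable (M j) g"
  shows "(\<integral>v. f (v i) * g (v j) \<partial>PiM I M) = integral\<^sup>L (M i) f * integral\<^sup>L (M j) g"
proof -
  define M' where "M' = (\<lambda>k. if k \<in> I then M k else return (count_space UNIV) 0)"
  have pM': "prob_space (M' k)" for k
    by (cases "k \<in> I") (simp_all add: M'_def assms(5) prob_space_return)
  interpret product_prob_space M' I
    by (simp add: product_prob_space_def product_prob_space_axioms_def product_sigma_finite_def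
        prob_space_imp_sigma_finite pM')
  have eq: "PiM I M = PiM I M'" by (intro PiM_cong) (auto simp: M'_def)
  define F where "F = (\<lambda>k. if k = i then f else if k = j then g else (\<lambda>_::real. 1::real))"
  have int: "integrable (M' k) (F k)" if k: "k \<in> I" for k
  proof -
    have e: "M' k = M k" using k by (simp add: M'_def)
    interpret pk: prob_space "M k" using assms(5) k by blast
    show ?thesis unfolding e F_def using assms(6,7) by auto
  qed
  have "(\<integral>v. (\<Prod>k\<in>I. F k (v k)) \<partial>PiM I M') = (\<Prod>k\<in>I. integral\<^sup>L (M' k) (F k))"
    by (rule product_integral_prod[OF assms(1) int])
  moreover have "\<And>v. (\<Prod>k\<in>I. F k (v k)) = f (v i) * g (v j)"
  proof -
    fix v :: "nat \<Rightarrow> real"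
    have "(\<Prod>k\<in>I. F k (v k)) = (\<Prod>k\<in>{i,j}. F k (v k))"
      using assms(1-3) by (intro prod.mono_neutral_right) (auto simp: F_def)
    then show "(\<Prod>k\<in>I. F k (v k)) = f (v i) * g (v j)" using assms(4) by (simp add: F_def)
  qed
  moreover have "(\<Prod>k\<in>I. integral\<^sup>L (M' k) (F k)) = (\<Prod>k\<in>{i,j}. integral\<^sup>L (M' k) (F k))"
  proof (intro prod.mono_neutral_right)
    show "\<forall>k\<in>I - {i, j}. integral\<^sup>L (M' k) (F k) = 1"
    proof
      fix k assume "k \<in> I - {i,j}"
      then have "F k = (\<lambda>_. 1)" by (simp add: F_def)
      then show "integral\<^sup>L (M' k) (F k) = 1" using prob_space.prob_space[OF pM'] by simp
    qed
  qed (use assms(1-3) in auto)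
  moreover have "(\<Prod>k\<in>{i,j}. integral\<^sup>L (M' k) (F k)) = integral\<^sup>L (M i) f * integral\<^sup>L (M j) g"
    using assms(2-4) by (simp add: F_def M'_def)
  ultimately show ?thesis using eq by simp
qed

definition trunc :: "real \<Rightarrow> real \<Rightarrow> real" where
  "trunc c x = (if \<bar>x\<bar> \<le> c then x else 0)"

lemma trunc_meas[measurable]: "trunc c \<in> borel_measurable borel"
  unfolding trunc_def by measurable

lemma dc_facts:
  assumes "P \<in> dist_class s"
  shows "prob_space P" "sets P = sets borel" "integrable P (\<lambda>x. x)" "integral\<^sup>L P (\<lambda>x. x) = 0"
    "(\<integral>\<^sup>+x. ennreal (\<bar>x\<bar> powr s) \<partial>P) \<le> 2"
  using assms unfolding dist_class_def by auto

lemma meas_P: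
  assumes "f \<in> measurable borel N" "sets P = sets borel"
  shows "f \<in> measurable P N"
  unfolding measurable_cong_sets[OF assms(2) refl] by (rule assms(1))

lemma abs_le_powr:
  fixes x :: real assumes "\<gamma> > 0" shows "\<bar>x\<bar> \<le> 1 + \<bar>x\<bar> powr (1+\<gamma>)"
proof (cases "\<bar>x\<bar> \<le> 1")
  case True then show ?thesis using powr_ge_zero[of "\<bar>x\<bar>" "1+\<gamma>"] by linarith
next
  case False
  then have "\<bar>x\<bar> powr 1 \<le> \<bar>x\<bar> powr (1+\<gamma>)" using assms by (intro powr_mono) auto
  then show ?thesis using False by simp
qed

lemma tail_le:
  fixes x c :: real assumes "c > 0" "\<gamma> > 0" "c < \<bar>x\<bar>"
  shows "\<bar>x\<bar> \<le> \<bar>x\<bar> powr (1+\<gamma>) / c powr \<gamma>"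
proof -
  have "\<bar>x\<bar> powr (1+\<gamma>) = \<bar>x\<bar> * \<bar>x\<bar> powr \<gamma>" using assms by (simp add: powr_add)
  moreover have "c powr \<gamma> \<le> \<bar>x\<bar> powr \<gamma>" using assms by (intro powr_mono2) auto
  ultimately have "\<bar>x\<bar> * c powr \<gamma> \<le> \<bar>x\<bar> powr (1+\<gamma>)" by (simp add: mult_left_mono)
  then show ?thesis using assms by (simp add: pos_le_divide_eq)
qed

lemma dc_abs:
  assumes "P \<in> dist_class (1+\<gamma>)" "\<gamma> > 0"
  shows "(\<integral>\<^sup>+x. ennreal \<bar>x\<bar> \<partial>P) \<le> 3"
proof -
  interpret prob_space P using dc_facts(1)[OF assms(1)] .
  have s: "sets P = sets borel" using dc_facts(2)[OF assms(1)] .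
  have m: "(\<lambda>x. ennreal (\<bar>x\<bar> powr (1+\<gamma>))) \<in> borel_measurable P"
    by (rule meas_P[OF _ s]) measurable
  have "(\<integral>\<^sup>+x. ennreal \<bar>x\<bar> \<partial>P) \<le> (\<integral>\<^sup>+x. (1 + ennreal (\<bar>x\<bar> powr (1+\<gamma>))) \<partial>P)"
  proof (intro nn_integral_mono)
    fix x :: real
    have "ennreal \<bar>x\<bar> \<le> ennreal (1 + \<bar>x\<bar> powr (1+\<gamma>))"
      by (rule ennreal_leI) (rule abs_le_powr[OF assms(2)])
    also have "\<dots> = 1 + ennreal (\<bar>x\<bar> powr (1+\<gamma>))" by (simp add: ennreal_plus)
    finally show "ennreal \<bar>x\<bar> \<le> 1 + ennreal (\<bar>x\<bar> powr (1+\<gamma>))" .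
  qed
  also have "\<dots> = (\<integral>\<^sup>+x. 1 \<partial>P) + (\<integral>\<^sup>+x. ennreal (\<bar>x\<bar> powr (1+\<gamma>)) \<partial>P)"
    by (rule nn_integral_add) (use m in auto)
  also have "\<dots> \<le> 1 + 2" using dc_facts(5)[OF assms(1)] by (intro add_mono) (auto simp: emeasure_space_1)
  finally show ?thesis by simp
qed

lemma dc_Z:
  assumes "P \<in> dist_class (1+\<gamma>)" "\<gamma> > 0" "c > 0"
  shows "(\<integral>\<^sup>+x. ennreal \<bar>x - trunc c x\<bar> \<partial>P) \<le> ennreal (2 / c powr \<gamma>)"
proof -
  interpret prob_space P using dc_facts(1)[OF assms(1)] .
  have s: "sets P = sets borel" using dc_facts(2)[OF assms(1)] .
  have m: "(\<lambda>x. ennreal (\<bar>x\<bar> powr (1+\<gamma>))) \<in> borel_measurable P"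
    by (rule meas_P[OF _ s]) measurable
  have pw: "ennreal \<bar>x - trunc c x\<bar> \<le> ennreal (\<bar>x\<bar> powr (1+\<gamma>)) * ennreal (1 / c powr \<gamma>)" for x
  proof (cases "\<bar>x\<bar> \<le> c")
    case True then show ?thesis by (simp add: trunc_def)
  next
    case False
    then have "\<bar>x - trunc c x\<bar> \<le> \<bar>x\<bar> powr (1+\<gamma>) * (1 / c powr \<gamma>)"
      using tail_le[OF assms(3,2)] by (simp add: trunc_def)
    then show ?thesis by (simp add: ennreal_mult'' [symmetric] ennreal_leI)
  qed
  have "(\<integral>\<^sup>+x. ennreal \<bar>x - trunc c x\<bar> \<partial>P) \<le> (\<integral>\<^sup>+x. ennreal (\<bar>x\<bar> powr (1+\<gamma>)) * ennreal (1 / c powr \<gamma>) \<partial>P)"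
    using pw by (intro nn_integral_mono) auto
  also have "\<dots> = (\<integral>\<^sup>+x. ennreal (\<bar>x\<bar> powr (1+\<gamma>)) \<partial>P) * ennreal (1 / c powr \<gamma>)"
    by (rule nn_integral_multc[OF m])
  also have "\<dots> \<le> 2 * ennreal (1 / c powr \<gamma>)"
    using dc_facts(5)[OF assms(1)] by (intro mult_right_mono) auto
  also have "\<dots> = ennreal (2 / c powr \<gamma>)"
    using ennreal_mult[of 2 "1 / c powr \<gamma>"] by simp
  finally show ?thesis .
qed

lemma dc_Y2:
  assumes "P \<in> dist_class (1+\<gamma>)" "\<gamma> > 0" "c > 0"
  shows "(\<integral>\<^sup>+x. ennreal ((trunc c x)\<^sup>2) \<partial>P) \<le> ennreal (3 * c)"
proof -
  interpret prob_space P using dc_facts(1)[OF assms(1)] .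
  have s: "sets P = sets borel" using dc_facts(2)[OF assms(1)] .
  have m: "(\<lambda>x. ennreal \<bar>x\<bar>) \<in> borel_measurable P"
    by (rule meas_P[OF _ s]) measurable
  have pw: "ennreal ((trunc c x)\<^sup>2) \<le> ennreal c * ennreal \<bar>x\<bar>" for x
  proof -
    have "(trunc c x)\<^sup>2 \<le> c * \<bar>x\<bar>"
    proof (cases "\<bar>x\<bar> \<le> c")
      case True
      have "x\<^sup>2 = \<bar>x\<bar> * \<bar>x\<bar>" by (simp add: power2_eq_square)
      also have "\<dots> \<le> c * \<bar>x\<bar>" using True by (intro mult_right_mono) auto
      finally show ?thesis using True by (simp add: trunc_def)
    next
      case False then show ?thesis using assms(3) by (simp add: trunc_def)
    qed
    then show ?thesis using assms(3) by (simp add: ennreal_mult[symmetric] ennreal_leI)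
  qed
  have "(\<integral>\<^sup>+x. ennreal ((trunc c x)\<^sup>2) \<partial>P) \<le> (\<integral>\<^sup>+x. ennreal c * ennreal \<bar>x\<bar> \<partial>P)"
    using pw by (intro nn_integral_mono) auto
  also have "\<dots> = ennreal c * (\<integral>\<^sup>+x. ennreal \<bar>x\<bar> \<partial>P)"
    by (rule nn_integral_cmult[OF m])
  also have "\<dots> \<le> ennreal c * 3"
    using dc_abs[OF assms(1,2)] by (intro mult_left_mono) auto
  also have "\<dots> = ennreal (3 * c)"
    using assms(3) ennreal_mult[of c 3] by (simp add: mult.commute)
  finally show ?thesis .
qed

lemma dc_real:
  assumes P: "P \<in> dist_class (1+\<gamma>)" and g: "\<gamma> > 0" and c: "c > 0"
  shows "integrable P (trunc c)" "integrable P (\<lambda>x. x - trunc c x)"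
    "integral\<^sup>L P (\<lambda>x. \<bar>x - trunc c x\<bar>) \<le> 2 / c powr \<gamma>"
    "\<bar>integral\<^sup>L P (trunc c)\<bar> \<le> 2 / c powr \<gamma>"
    "integral\<^sup>L P (\<lambda>x. (trunc c x - integral\<^sup>L P (trunc c))\<^sup>2) \<le> 3 * c"
proof -
  interpret prob_space P using dc_facts(1)[OF P] .
  have s: "sets P = sets borel" using dc_facts(2)[OF P] .
  have mt: "trunc c \<in> borel_measurable P" by (rule meas_P[OF _ s]) measurable
  have mt2: "(\<lambda>x. (trunc c x)\<^sup>2) \<in> borel_measurable P" by (rule meas_P[OF _ s]) measurable
  show it: "integrable P (trunc c)"
    by (rule integrable_const_bound[where B=c]) (use c mt in \<open>auto simp: trunc_def\<close>)
  have it2: "integrable P (\<lambda>x. (trunc c x)\<^sup>2)"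
  proof (rule integrable_const_bound[where B="c^2"])
    have "x\<^sup>2 \<le> c\<^sup>2" if "\<bar>x\<bar> \<le> c" for x
      by (metis abs_le_square_iff abs_of_pos c that)
    then show "AE x in P. norm ((trunc c x)\<^sup>2) \<le> c^2"
      using c by (auto simp: trunc_def)
  qed (rule mt2)
  show iz: "integrable P (\<lambda>x. x - trunc c x)"
    by (rule Bochner_Integration.integrable_diff[OF dc_facts(3)[OF P] it])
  have "ennreal (integral\<^sup>L P (\<lambda>x. \<bar>x - trunc c x\<bar>)) = (\<integral>\<^sup>+x. ennreal \<bar>x - trunc c x\<bar> \<partial>P)"
    by (rule nn_integral_eq_integral[symmetric]) (use iz in auto)
  also have "\<dots> \<le> ennreal (2 / c powr \<gamma>)" by (rule dc_Z[OF P g c])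
  finally show Z: "integral\<^sup>L P (\<lambda>x. \<bar>x - trunc c x\<bar>) \<le> 2 / c powr \<gamma>"
    using c by (subst (asm) ennreal_le_iff) auto
  have "integral\<^sup>L P (trunc c) = integral\<^sup>L P (\<lambda>x. x) - integral\<^sup>L P (\<lambda>x. x - trunc c x)"
    using Bochner_Integration.integral_diff[OF dc_facts(3)[OF P] it] by simp
  then have "\<bar>integral\<^sup>L P (trunc c)\<bar> = \<bar>integral\<^sup>L P (\<lambda>x. x - trunc c x)\<bar>"
    using dc_facts(4)[OF P] by simp
  also have "\<dots> \<le> integral\<^sup>L P (\<lambda>x. \<bar>x - trunc c x\<bar>)"
    using integral_norm_bound[of P "\<lambda>x. x - trunc c x"] by simp
  finally show "\<bar>integral\<^sup>L P (trunc c)\<bar> \<le> 2 / c powr \<gamma>" using Z by linarith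
  have "ennreal (integral\<^sup>L P (\<lambda>x. (trunc c x)\<^sup>2)) = (\<integral>\<^sup>+x. ennreal ((trunc c x)\<^sup>2) \<partial>P)"
    by (rule nn_integral_eq_integral[symmetric]) (use it2 in auto)
  also have "\<dots> \<le> ennreal (3 * c)" by (rule dc_Y2[OF P g c])
  finally have Y2: "integral\<^sup>L P (\<lambda>x. (trunc c x)\<^sup>2) \<le> 3 * c"
    using c by (subst (asm) ennreal_le_iff) auto
  have "integral\<^sup>L P (\<lambda>x. (trunc c x - integral\<^sup>L P (trunc c))\<^sup>2)
      = integral\<^sup>L P (\<lambda>x. (trunc c x)\<^sup>2) - (integral\<^sup>L P (trunc c))\<^sup>2"
    by (rule variance_eq[OF it it2])
  also have "\<dots> \<le> 3 * c" using Y2 zero_le_power2[of "integral\<^sup>L P (trunc c)"] by linarith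
  finally show "integral\<^sup>L P (\<lambda>x. (trunc c x - integral\<^sup>L P (trunc c))\<^sup>2) \<le> 3 * c" .
qed

lemma amgm_abs:
  fixes x t :: real assumes t: "t > 0"
  shows "\<bar>x\<bar> \<le> t / 2 + x\<^sup>2 / (2 * t)"
proof -
  have "0 \<le> (\<bar>x\<bar> - t)\<^sup>2" by simp
  also have "(\<bar>x\<bar> - t)\<^sup>2 = 2 * t * (t / 2 + x\<^sup>2 / (2 * t) - \<bar>x\<bar>)"
    using t by (simp add: field_simps power2_eq_square)
  finally show ?thesis using t by (simp add: zero_le_mult_iff)
qed

lemma amgm_abs2:
  fixes x s :: real assumes s: "s > 0"
  shows "2 * \<bar>x\<bar> \<le> s * \<bar>x\<bar>\<^sup>2 + 1 / s"
proof -
  have "0 \<le> (s * \<bar>x\<bar> - 1)\<^sup>2" by simp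
  also have "(s * \<bar>x\<bar> - 1)\<^sup>2 = s * (s * \<bar>x\<bar>\<^sup>2 + 1 / s - 2 * \<bar>x\<bar>)"
    using s by (simp add: field_simps power2_eq_square)
  finally show ?thesis using s by (simp add: zero_le_mult_iff)
qed

lemma sum_abs_le:
  fixes a :: "nat \<Rightarrow> real"
  assumes n: "n \<ge> 1" and asum: "(\<Sum>i=1..n. \<bar>a i\<bar>^2) \<le> 4 / real n"
  shows "(\<Sum>i=1..n. \<bar>a i\<bar>) \<le> 2"
proof -
  define s where "s = real n / 2"
  have s: "s > 0" using n by (simp add: s_def)
  have "2 * (\<Sum>i=1..n. \<bar>a i\<bar>) = (\<Sum>i=1..n. 2 * \<bar>a i\<bar>)" by (simp add: sum_distrib_left)
  also have "\<dots> \<le> (\<Sum>i=1..n. s * \<bar>a i\<bar>\<^sup>2 + 1 / s)"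
    by (intro sum_mono amgm_abs2[OF s])
  also have "\<dots> = s * (\<Sum>i=1..n. \<bar>a i\<bar>\<^sup>2) + real n / s"
    by (simp add: sum.distrib sum_distrib_left)
  also have "\<dots> \<le> s * (4 / real n) + real n / s"
    using asum s by (intro add_right_mono mult_left_mono) auto
  also have "\<dots> = 4" using n by (simp add: s_def)
  finally show ?thesis by simp
qed

lemma main_bound:
  fixes a :: "nat \<Rightarrow> real" and P :: "nat \<Rightarrow> real measure" and n :: nat
  assumes n: "n \<ge> 1" and asum: "(\<Sum>i=1..n. \<bar>a i\<bar>^2) \<le> 4 / real n"
    and g: "\<gamma> > 0" and c: "c > 0" and t: "t > 0"
    and P: "\<And>i. i \<in> {1..n} \<Longrightarrow> P i \<in> dist_class (1+\<gamma>)"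
  shows "(\<integral>\<^sup>+v. ennreal \<bar>\<Sum>i=1..n. a i * v i\<bar> \<partial>PiM {1..n} P)
      \<le> ennreal (8 / c powr \<gamma> + t/2 + 6*c/(real n*t))"
proof -
  define I where "I = {1..n}"
  have fI: "finite I" by (simp add: I_def)
  have PI: "P i \<in> dist_class (1+\<gamma>)" if "i \<in> I" for i using P that by (simp add: I_def)
  have pP: "prob_space (P i)" if "i \<in> I" for i using dc_facts(1)[OF PI[OF that]] .
  have sP: "sets (P i) = sets borel" if "i \<in> I" for i using dc_facts(2)[OF PI[OF that]] .
  interpret M: prob_space "PiM I P" by (rule prob_space_PiM) (rule pP)
  define m where "m i = integral\<^sup>L (P i) (trunc c)" for i
  define W where "W i x = trunc c x - m i" for i x
  define Z where "Z x = x - trunc c x" for x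
  define A where "A v = (\<Sum>i\<in>I. a i * W i (v i))" for v :: "nat \<Rightarrow> real"
  define B where "B v = (\<Sum>i\<in>I. a i * (Z (v i) + m i))" for v :: "nat \<Rightarrow> real"
  define K where "K = c + 2 / c powr \<gamma>"
  have SAB: "(\<Sum>i\<in>I. a i * v i) = A v + B v" for v
    by (simp add: A_def B_def W_def Z_def sum.distrib[symmetric] algebra_simps)
  have Wm: "W i \<in> borel_measurable borel" for i unfolding W_def by measurable
  have Zm: "Z \<in> borel_measurable borel" unfolding Z_def by measurable
  have mbound: "\<bar>m i\<bar> \<le> 2 / c powr \<gamma>" if "i \<in> I" for i
    unfolding m_def by (rule dc_real(4)[OF PI[OF that] g c])
  have Wb: "\<bar>W i x\<bar> \<le> K" if "i \<in> I" for i x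
  proof -
    have "\<bar>trunc c x\<bar> \<le> c" using c by (simp add: trunc_def)
    then show ?thesis using mbound[OF that] unfolding W_def K_def by linarith
  qed
  have WiP: "integrable (P i) (W i)" and Wint: "integral\<^sup>L (P i) (W i) = 0" if "i \<in> I" for i
  proof -
    interpret Pi: prob_space "P i" by (rule pP[OF that])
    have it: "integrable (P i) (trunc c)" by (rule dc_real(1)[OF PI[OF that] g c])
    show "integrable (P i) (W i)" unfolding W_def using it by auto
    show "integral\<^sup>L (P i) (W i) = 0" unfolding W_def using it by (simp add: m_def Pi.prob_space)
  qed
  have Wvar: "integral\<^sup>L (P i) (\<lambda>x. (W i x)\<^sup>2) \<le> 3 * c" if "i \<in> I" for i
    unfolding W_def m_def by (rule dc_real(5)[OF PI[OF that] g c])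
  have Wcm: "(\<lambda>v. W i (v i)) \<in> borel_measurable (PiM I P)" if "i \<in> I" for i
    by (rule coord_meas[where M=P, OF that sP[OF that] Wm[of i]])
  have termint: "integrable (PiM I P) (\<lambda>v. a i * a j * (W i (v i) * W j (v j)))"
    if "i \<in> I" "j \<in> I" for i j
  proof (rule M.integrable_const_bound[where B="\<bar>a i * a j\<bar> * (K * K)"])
    show "AE x in PiM I P. norm (a i * a j * (W i (x i) * W j (x j))) \<le> \<bar>a i * a j\<bar> * (K * K)"
    proof (rule AE_I2)
      fix x :: "nat \<Rightarrow> real"
      have "\<bar>W i (x i)\<bar> * \<bar>W j (x j)\<bar> \<le> K * K"
        using Wb[OF that(1), of "x i"] Wb[OF that(2), of "x j"] abs_ge_zero[of "W i (x i)"] by (intro mult_mono) auto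
      then show "norm (a i * a j * (W i (x i) * W j (x j))) \<le> \<bar>a i * a j\<bar> * (K * K)"
        by (simp add: abs_mult mult_left_mono)
    qed
    show "(\<lambda>x. a i * a j * (W i (x i) * W j (x j))) \<in> borel_measurable (PiM I P)"
      using Wcm[OF that(1)] Wcm[OF that(2)] by measurable
  qed
  have A2: "(A v)\<^sup>2 = (\<Sum>i\<in>I. \<Sum>j\<in>I. a i * a j * (W i (v i) * W j (v j)))" for v
    by (simp add: A_def power2_eq_square sum_product mult_ac)
  have A2int: "integrable (PiM I P) (\<lambda>v. (A v)\<^sup>2)"
    unfolding A2 by (intro Bochner_Integration.integrable_sum termint)
  have "integral\<^sup>L (PiM I P) (\<lambda>v. (A v)\<^sup>2)
      = (\<Sum>i\<in>I. \<Sum>j\<in>I. integral\<^sup>L (PiM I P) (\<lambda>v. a i * a j * (W i (v i) * W j (v j))))"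
    unfolding A2 using termint by (simp add: Bochner_Integration.integral_sum Bochner_Integration.integrable_sum)
  also have "\<dots> = (\<Sum>i\<in>I. \<Sum>j\<in>I. if j = i then a i * a i * integral\<^sup>L (P i) (\<lambda>x. (W i x)\<^sup>2) else 0)"
  proof (intro sum.cong refl)
    fix i j assume ij: "i \<in> I" "j \<in> I"
    show "integral\<^sup>L (PiM I P) (\<lambda>v. a i * a j * (W i (v i) * W j (v j)))
        = (if j = i then a i * a i * integral\<^sup>L (P i) (\<lambda>x. (W i x)\<^sup>2) else 0)"
    proof (cases "j = i")
      case True
      have "integral\<^sup>L (PiM I P) (\<lambda>v. W i (v i) * W i (v i)) = integral\<^sup>L (P i) (\<lambda>x. W i x * W i x)"
        by (rule coord_integral(1)[where M=P, OF ij(1) pP sP[OF ij(1)]]) (use Wm in measurable)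
      then show ?thesis using True by (simp add: power2_eq_square)
    next
      case False
      have "integral\<^sup>L (PiM I P) (\<lambda>v. W i (v i) * W j (v j)) = integral\<^sup>L (P i) (W i) * integral\<^sup>L (P j) (W j)"
        by (rule pair_integral[OF fI ij _ pP WiP[OF ij(1)] WiP[OF ij(2)]]) (use False in auto)
      then show ?thesis using False Wint[OF ij(1)] by simp
    qed
  qed
  also have "\<dots> = (\<Sum>i\<in>I. a i * a i * integral\<^sup>L (P i) (\<lambda>x. (W i x)\<^sup>2))"
    using fI by (simp add: sum.delta)
  also have "\<dots> \<le> (\<Sum>i\<in>I. \<bar>a i\<bar>\<^sup>2 * (3 * c))"
    using Wvar by (intro sum_mono) (simp add: power2_eq_square mult_left_mono)
  also have "\<dots> = (3 * c) * (\<Sum>i\<in>I. \<bar>a i\<bar>\<^sup>2)" by (simp add: sum_distrib_left mult_ac)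
  also have "\<dots> \<le> (3 * c) * (4 / real n)"
    using asum c by (intro mult_left_mono) (auto simp: I_def)
  finally have EA2: "integral\<^sup>L (PiM I P) (\<lambda>v. (A v)\<^sup>2) \<le> 12 * c / real n" by simp
  have ZiP: "integrable (P i) Z" if "i \<in> I" for i
    unfolding Z_def by (rule dc_real(2)[OF PI[OF that] g c])
  have Zc: "integrable (PiM I P) (\<lambda>v. Z (v i))" if "i \<in> I" for i
    using coord_integral(2)[where M=P, OF that pP sP[OF that] Zm] ZiP[OF that] by simp
  have EZ: "integral\<^sup>L (PiM I P) (\<lambda>v. \<bar>Z (v i)\<bar>) \<le> 2 / c powr \<gamma>" if "i \<in> I" for i
  proof -
    have "integral\<^sup>L (PiM I P) (\<lambda>v. \<bar>Z (v i)\<bar>) = integral\<^sup>L (P i) (\<lambda>x. \<bar>Z x\<bar>)"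
      by (rule coord_integral(1)[where M=P, OF that pP sP[OF that]]) (use Zm in measurable)
    also have "\<dots> \<le> 2 / c powr \<gamma>" unfolding Z_def by (rule dc_real(3)[OF PI[OF that] g c])
    finally show ?thesis .
  qed
  define Bb where "Bb v = (\<Sum>i\<in>I. \<bar>a i\<bar> * (\<bar>Z (v i)\<bar> + \<bar>m i\<bar>))" for v :: "nat \<Rightarrow> real"
  have BBb: "\<bar>B v\<bar> \<le> Bb v" for v
  proof -
    have "\<bar>B v\<bar> \<le> (\<Sum>i\<in>I. \<bar>a i * (Z (v i) + m i)\<bar>)" unfolding B_def by (rule sum_abs)
    also have "\<dots> \<le> Bb v" unfolding Bb_def
      by (intro sum_mono) (simp add: abs_mult mult_left_mono abs_triangle_ineq)
    finally show ?thesis .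
  qed
  have Bint: "integrable (PiM I P) B"
    unfolding B_def using Zc by (intro Bochner_Integration.integrable_sum integrable_mult_right Bochner_Integration.integrable_add) auto
  have Bbint: "integrable (PiM I P) Bb"
    unfolding Bb_def using Zc by (intro Bochner_Integration.integrable_sum integrable_mult_right Bochner_Integration.integrable_add integrable_abs) auto
  have "integral\<^sup>L (PiM I P) Bb = (\<Sum>i\<in>I. \<bar>a i\<bar> * (integral\<^sup>L (PiM I P) (\<lambda>v. \<bar>Z (v i)\<bar>) + \<bar>m i\<bar>))"
    unfolding Bb_def using Zc by (simp add: Bochner_Integration.integral_sum Bochner_Integration.integrable_sum integrable_abs M.prob_space)
  also have "\<dots> \<le> (\<Sum>i\<in>I. \<bar>a i\<bar> * (4 / c powr \<gamma>))"
  proof (intro sum_mono mult_left_mono)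
    fix i assume "i \<in> I"
    then show "integral\<^sup>L (PiM I P) (\<lambda>v. \<bar>Z (v i)\<bar>) + \<bar>m i\<bar> \<le> 4 / c powr \<gamma>"
      using EZ[of i] mbound[of i] by simp
  qed simp
  also have "\<dots> = (\<Sum>i\<in>I. \<bar>a i\<bar>) * (4 / c powr \<gamma>)" by (rule sum_distrib_right[symmetric])
  also have "\<dots> \<le> 2 * (4 / c powr \<gamma>)"
    using sum_abs_le[OF n asum] c by (intro mult_right_mono) (auto simp: I_def)
  finally have EB: "integral\<^sup>L (PiM I P) Bb \<le> 8 / c powr \<gamma>" by simp
  define F where "F v = t / 2 + (A v)\<^sup>2 / (2 * t) + Bb v" for v
  have SF: "\<bar>\<Sum>i=1..n. a i * v i\<bar> \<le> F v" for v
  proof -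
    have "\<bar>\<Sum>i=1..n. a i * v i\<bar> = \<bar>A v + B v\<bar>" using SAB[of v] by (simp add: I_def)
    also have "\<dots> \<le> \<bar>A v\<bar> + \<bar>B v\<bar>" by (rule abs_triangle_ineq)
    also have "\<dots> \<le> F v" unfolding F_def using amgm_abs[OF t, of "A v"] BBb[of v] by linarith
    finally show ?thesis .
  qed
  have Fint: "integrable (PiM I P) F"
    unfolding F_def using A2int Bbint by auto
  have F0: "0 \<le> F v" for v using SF[of v] by linarith
  have "(\<integral>\<^sup>+v. ennreal \<bar>\<Sum>i=1..n. a i * v i\<bar> \<partial>PiM I P) \<le> (\<integral>\<^sup>+v. ennreal (F v) \<partial>PiM I P)"
    using SF by (intro nn_integral_mono ennreal_leI) auto
  also have "\<dots> = ennreal (integral\<^sup>L (PiM I P) F)"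
    by (rule nn_integral_eq_integral) (use Fint F0 in auto)
  also have "integral\<^sup>L (PiM I P) F = t / 2 + integral\<^sup>L (PiM I P) (\<lambda>v. (A v)\<^sup>2) / (2 * t) + integral\<^sup>L (PiM I P) Bb"
    unfolding F_def using A2int Bbint by (simp add: M.prob_space)
  also have "\<dots> \<le> t / 2 + (12 * c / real n) / (2 * t) + 8 / c powr \<gamma>"
    using EA2 EB t by (intro add_mono divide_right_mono) auto
  also have "\<dots> = 8 / c powr \<gamma> + t/2 + 6*c/(real n*t)" using t by (simp add: field_simps)
  finally show ?thesis by (simp add: I_def ennreal_leI)
qed

lemma f_eq:
  fixes x :: real assumes x: "x > 0"
  shows "8 / (x powr (1/2)) powr \<gamma> + x powr (-1/4) / 2 + 6 * x powr (1/2) / (x * x powr (-1/4))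
       = 8 * x powr (-(\<gamma>/2)) + 13/2 * x powr (-1/4)"
proof -
  have a: "8 / (x powr (1/2)) powr \<gamma> = 8 * x powr (-(\<gamma>/2))"
    using x by (simp add: powr_powr powr_minus_divide)
  have "x * x powr (-1/4) = x powr (1 + (-1/4))" using x by (subst powr_add) simp
  also have "\<dots> = x powr (3/4)" by simp
  finally have "x * x powr (-1/4) = x powr (3/4)" .
  then have b: "6 * x powr (1/2) / (x * x powr (-1/4)) = 6 * x powr (-1/4)"
  proof -
    have "x powr (1/2) / x powr (3/4) = x powr (1/2 - 3/4)" by (rule powr_diff[symmetric])
    then have "x powr (1/2) / x powr (3/4) = x powr (-1/4)" by simp
    then show ?thesis using \<open>x * x powr (-1/4) = x powr (3/4)\<close> by (simp add: times_divide_eq_right[symmetric] del: times_divide_eq_right)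
  qed
  show ?thesis using a b by simp
qed

lemma lim_f:
  assumes g: "\<gamma> > 0"
  shows "(\<lambda>n. 8 * real n powr (-(\<gamma>/2)) + 13/2 * real n powr (-1/4)) \<longlonglongrightarrow> 0"
proof -
  have l1: "(\<lambda>n. real n powr (-(\<gamma>/2))) \<longlonglongrightarrow> 0"
    by (rule tendsto_neg_powr[OF _ filterlim_real_sequentially]) (use g in simp)
  have l2: "(\<lambda>n. real n powr (-1/4)) \<longlonglongrightarrow> 0"
    by (rule tendsto_neg_powr[OF _ filterlim_real_sequentially]) simp
  have "(\<lambda>n. 8 * real n powr (-(\<gamma>/2)) + 13/2 * real n powr (-1/4)) \<longlonglongrightarrow> 8 * 0 + 13/2 * 0"
    by (intro tendsto_add tendsto_mult tendsto_const l1 l2)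
  then show ?thesis by simp
qed

theorem lemmaA22_main:
  fixes a :: "nat \<Rightarrow> nat \<Rightarrow> real" and \<gamma> :: real
  assumes "\<And>n. n \<ge> 1 \<Longrightarrow> (\<Sum>i=1..n. \<bar>a n i\<bar>^2) \<le> 4 / real n"
    and "\<gamma> > 0"
  shows "(\<lambda>n. SUP P \<in> Pi {1..n} (\<lambda>_. dist_class (1 + \<gamma>)).
            \<integral>\<^sup>+ v. ennreal \<bar>\<Sum>i=1..n. a n i * (v i - (\<integral>y. y \<partial>(P i)))\<bar>
              \<partial>(PiM {1..n} P))
         \<longlonglongrightarrow> 0"
proof -
  define f where "f n = 8 / (real n powr (1/2)) powr \<gamma> + real n powr (-1/4) / 2
      + 6 * real n powr (1/2) / (real n * real n powr (-1/4))" for n :: nat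
  have flim: "(\<lambda>n. ennreal (f n)) \<longlonglongrightarrow> 0"
  proof -
    have ev: "\<forall>\<^sub>F n in sequentially. 8 * real n powr (-(\<gamma>/2)) + 13/2 * real n powr (-1/4) = f n"
    proof (intro eventually_sequentiallyI[of 1])
      fix n :: nat assume "1 \<le> n"
      then have "real n > 0" by simp
      from f_eq[OF this, of \<gamma>] show "8 * real n powr (-(\<gamma>/2)) + 13/2 * real n powr (-1/4) = f n"
        unfolding f_def by simp
    qed
    have "f \<longlonglongrightarrow> 0"
      by (rule Lim_transform_eventually[OF lim_f[OF assms(2)] ev])
    then show ?thesis using tendsto_ennrealI[of f 0 sequentially] by simp
  qed
  have bound: "(SUP P \<in> Pi {1..n} (\<lambda>_. dist_class (1 + \<gamma>)).
            \<integral>\<^sup>+ v. ennreal \<bar>\<Sum>i=1..n. a n i * (v i - (\<integral>y. y \<partial>(P i)))\<bar>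
              \<partial>(PiM {1..n} P)) \<le> ennreal (f n)" if n: "n \<ge> 1" for n
  proof (rule SUP_least)
    fix P assume P: "P \<in> Pi {1..n} (\<lambda>_. dist_class (1 + \<gamma>))"
    then have Pi: "\<And>i. i \<in> {1..n} \<Longrightarrow> P i \<in> dist_class (1+\<gamma>)" by auto
    have eq: "(\<Sum>i=1..n. a n i * (v i - (\<integral>y. y \<partial>(P i)))) = (\<Sum>i=1..n. a n i * v i)" for v :: "nat \<Rightarrow> real"
      by (intro sum.cong refl) (simp add: dc_facts(4)[OF Pi])
    have npos: "real n > 0" using n by simp
    have "(\<integral>\<^sup>+ v. ennreal \<bar>\<Sum>i=1..n. a n i * v i\<bar> \<partial>(PiM {1..n} P))
        \<le> ennreal (8 / (real n powr (1/2)) powr \<gamma> + real n powr (-1/4) / 2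
            + 6 * real n powr (1/2) / (real n * real n powr (-1/4)))"
      by (rule main_bound[OF n assms(1)[OF n] assms(2) _ _ Pi]) (use npos in auto)
    then show "(\<integral>\<^sup>+ v. ennreal \<bar>\<Sum>i=1..n. a n i * (v i - (\<integral>y. y \<partial>(P i)))\<bar> \<partial>(PiM {1..n} P)) \<le> ennreal (f n)"
      unfolding eq f_def .
  qed
  show ?thesis
  proof (rule tendsto_sandwich[OF _ _ tendsto_const flim])
    show "\<forall>\<^sub>F n in sequentially. 0 \<le> (SUP P \<in> Pi {1..n} (\<lambda>_. dist_class (1 + \<gamma>)).
            \<integral>\<^sup>+ v. ennreal \<bar>\<Sum>i=1..n. a n i * (v i - (\<integral>y. y \<partial>(P i)))\<bar>
              \<partial>(PiM {1..n} P))" by simp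
    show "\<forall>\<^sub>F n in sequentially. (SUP P \<in> Pi {1..n} (\<lambda>_. dist_class (1 + \<gamma>)).
            \<integral>\<^sup>+ v. ennreal \<bar>\<Sum>i=1..n. a n i * (v i - (\<integral>y. y \<partial>(P i)))\<bar>
              \<partial>(PiM {1..n} P)) \<le> ennreal (f n)"
      using bound by (intro eventually_sequentiallyI[of 1]) auto
  qed
qed

lemmas lemmaA22 = lemmaA22_main

end
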